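(* Let $\mathcal{X}$ be a finite alphabet and $P_0,P_1$ any two probability distributions on $\mathcal{X}$. There exists $\varepsilon'(P_0,P_1)>0$ such that for all $\varepsilon\le\varepsilon'$, the binary mechanism maximizes the Chernoff information $I_{ch}(Q_0,Q_1)$ between the induced output distributions over all $\varepsilon$-LDP mechanisms; that is, the maximum of $I_{ch}(Q_0,Q_1)$ over all $\varepsilon$-LDP mechanisms (with finite output alphabet) is attained by a binary mechanism $W^b_{\tau}$ for a suitable $\tau>0$.
   Context: A mechanism $W_{Y|X}:\mathcal{X}\to\mathcal{Y}$ ($\mathcal{Y}$ finite) is $\varepsilon$-LDP if $W_{Y|X}(S|x)\le e^{\varepsilon}W_{Y|X}(S|x')$ for all $x,x'$ and $S\subseteq\mathcal{Y}$; $Q_i(y)=\sum_xP_i(x)W_{Y|X}(y|x)$. Binary mechanism $W^b_\tau:\mathcal{X}\to\{0,1\}$ (parameter $\tau>0$): set $\mathcal{S}_\tau=\{x:P_0(x)\ge\tau P_1(x)\}$, map $x$ to $V=0$ if $x\in\mathcal{S}_\tau$ and $V=1$ otherwise, then output $Y=V$ with probability $\frac{e^\varepsilon}{e^\varepsilon+1}$ and $Y=1-V$ with probability $\frac{1}{e^\varepsilon+1}$. Chernoff information: $I_{ch}(Q_0,Q_1)=-\min_{\lambda\in(0,1)}\log\sum_yQ_0(y)^\lambda Q_1(y)^{1-\lambda}$. *)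

theory Defs
  imports Complex_Main
begin

definition is_distr :: "('x::finite \<Rightarrow> real) \<Rightarrow> bool" where
  "is_distr P \<longleftrightarrow> (\<forall>x. 0 \<le> P x) \<and> (\<Sum>x\<in>UNIV. P x) = 1"

text \<open>A mechanism with finite output alphabet {0..<k} (any finite alphabet is
  in bijection with such a set): W x y is the probability of output y given input x.\<close>
definition is_mechanism :: "nat \<Rightarrow> ('x::finite \<Rightarrow> nat \<Rightarrow> real) \<Rightarrow> bool" where
  "is_mechanism k W \<longleftrightarrow>
     (\<forall>x. \<forall>y\<in>{..<k}. 0 \<le> W x y) \<and> (\<forall>x. (\<Sum>y\<in>{..<k}. W x y) = 1)"

definition is_LDP :: "real \<Rightarrow> nat \<Rightarrow> ('x::finite \<Rightarrow> nat \<Rightarrow> real) \<Rightarrow> bool" where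
  "is_LDP \<epsilon> k W \<longleftrightarrow>
     (\<forall>x x'. \<forall>S\<subseteq>{..<k}. (\<Sum>y\<in>S. W x y) \<le> exp \<epsilon> * (\<Sum>y\<in>S. W x' y))"

definition out_distr :: "('x::finite \<Rightarrow> real) \<Rightarrow> ('x \<Rightarrow> nat \<Rightarrow> real) \<Rightarrow> nat \<Rightarrow> real" where
  "out_distr P W y = (\<Sum>x\<in>UNIV. P x * W x y)"

definition chernoff_info :: "nat set \<Rightarrow> (nat \<Rightarrow> real) \<Rightarrow> (nat \<Rightarrow> real) \<Rightarrow> real" where
  "chernoff_info Y Q0 Q1 =
     - (INF t\<in>{0<..<(1::real)}. ln (\<Sum>y\<in>Y. Q0 y powr t * Q1 y powr (1 - t)))"

definition binary_mech :: "('x \<Rightarrow> real) \<Rightarrow> ('x \<Rightarrow> real) \<Rightarrow> real \<Rightarrow> real \<Rightarrow> 'x \<Rightarrow> nat \<Rightarrow> real" where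
  "binary_mech P0 P1 \<tau> \<epsilon> x y =
     (let V = (if P0 x \<ge> \<tau> * P1 x then 0 else 1 :: nat) in
      if y = V then exp \<epsilon> / (exp \<epsilon> + 1)
      else if y = 1 - V then 1 / (exp \<epsilon> + 1) else 0)"

end

theory Submission
  imports Defs "HOL-Analysis.Analysis"
begin

lemma taylor_powr3:
  fixes l x :: real
  assumes l: "0 < l" "l < 1" and x: "\<bar>x\<bar> \<le> 1/2"
  shows "\<bar>(1+x) powr l - 1 - l*x + l*(1-l)/2*x^2\<bar> \<le> 3*(l*(1-l))*\<bar>x\<bar>^3"
proof (cases "x = 0")
  case True then show ?thesis by simp
next
  case False
  define diff where "diff = (\<lambda>m::nat. \<lambda>t::real. (\<Prod>i<m. (l - real i)) * (1+t) powr (l - real m))"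
  have D: "\<forall>m t. m < 3 \<and> -1/2 \<le> t \<and> t \<le> 1/2 \<longrightarrow> DERIV (diff m) t :> diff (Suc m) t"
  proof (intro allI impI)
    fix m :: nat and t :: real assume "m < 3 \<and> -1/2 \<le> t \<and> t \<le> 1/2"
    then have tp: "0 < 1 + t" by auto
    have "((\<lambda>t. (1+t) powr (l - real m)) has_real_derivative (l - real m) * (1+t) powr (l - real m - 1)) (at t)"
      using tp by (auto intro!: derivative_eq_intros)
    then have "((\<lambda>t. (\<Prod>i<m. (l - real i)) * (1+t) powr (l - real m)) has_real_derivative
         (\<Prod>i<m. (l - real i)) * ((l - real m) * (1+t) powr (l - real m - 1))) (at t)"
      by (rule DERIV_cmult)
    moreover have "(\<Prod>i<m. (l - real i)) * ((l - real m) * (1+t) powr (l - real m - 1)) = diff (Suc m) t"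
      unfolding diff_def by (simp add: algebra_simps)
    ultimately show "DERIV (diff m) t :> diff (Suc m) t" unfolding diff_def by simp
  qed
  have d0: "diff 0 = (\<lambda>t. (1+t) powr l)" unfolding diff_def by simp
  have "\<exists>t. (if x < 0 then x < t \<and> t < 0 else 0 < t \<and> t < x) \<and>
     (1+x) powr l = (\<Sum>m<3. (diff m 0 / fact m) * (x - 0)^m) + (diff 3 t / fact 3) * (x - 0)^3"
    by (rule Taylor[OF _ d0 D]) (use x False in \<open>auto simp: abs_le_iff\<close>)
  then obtain t where t: "(if x < 0 then x < t \<and> t < 0 else 0 < t \<and> t < x)"
     and eq: "(1+x) powr l = (\<Sum>m<3. (diff m 0 / fact m) * (x - 0)^m) + (diff 3 t / fact 3) * (x - 0)^3"
    by blast
  have t2: "-1/2 < t" "t < 1/2" using t x by (auto split: if_splits simp: abs_le_iff)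
  have s: "(\<Sum>m<3. (diff m 0 / fact m) * (x - 0)^m) = 1 + l*x + l*(l-1)/2*x^2"
    by (simp add: diff_def eval_nat_numeral fact_numeral lessThan_Suc)
  have d3: "diff 3 t = l*(l-1)*(l-2) * (1+t) powr (l - 3)"
    by (simp add: diff_def eval_nat_numeral lessThan_Suc)
  have pb: "(1+t) powr (l - 3) \<le> 8"
  proof -
    have "(1+t) powr (l-3) \<le> (1/2) powr (l-3)"
      using t2 l by (intro powr_mono2') auto
    also have "(1/2::real) powr (l-3) = 2 powr (3 - l)"
      proof -
      have "1 / (2::real) powr (l - 3) = 2 powr (3-l)" by (metis minus_diff_eq powr_minus_divide)
      then show ?thesis by (simp add: powr_divide)
    qed
    also have "\<dots> \<le> 2 powr 3" using l by (intro powr_mono) auto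
    finally show ?thesis by simp
  qed
  have pp: "0 \<le> (1+t) powr (l - 3)" by simp
  have e1: "(1+x) powr l - 1 - l*x + l*(1-l)/2*x^2 = diff 3 t / 6 * x^3"
    using eq s by (simp add: fact_numeral field_simps)
  have "\<bar>(1+x) powr l - 1 - l*x + l*(1-l)/2*x^2\<bar> = \<bar>diff 3 t / 6 * x^3\<bar>"
    by (simp only: e1)
  also have "\<dots> = l*(1-l)*(2-l) * (1+t) powr (l - 3) / 6 * \<bar>x\<bar>^3"
    using l pp by (simp add: d3 abs_mult power_abs abs_mult_pos)
  also have "\<dots> \<le> l*(1-l)*2 * 8 / 6 * \<bar>x\<bar>^3"
    using l pb pp by (intro mult_right_mono divide_right_mono mult_mono) auto
  also have "\<dots> \<le> 3*(l*(1-l))*\<bar>x\<bar>^3"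
    using l by (intro mult_right_mono) auto
  finally show ?thesis .
qed

lemma vert_exp:
  fixes l a p q :: real
  assumes l: "0 < l" "l < 1" and a: "0 \<le> a" "a \<le> 1/2"
    and p: "0 \<le> p" "p \<le> 1" and q: "0 \<le> q" "q \<le> 1"
  shows "\<bar>(1+a*q) powr l * (1+a*p) powr (1-l) - (1 + a*((1-l)*p + l*q)) + l*(1-l)/2*a^2*(q-p)^2\<bar>
          \<le> 4*(l*(1-l))*a^3"
proof -
  define P where "P = 1 + a*p"
  define x where "x = a*(q-p)/P"
  have P1: "1 \<le> P" using a p by (simp add: P_def)
  have Px: "P*x = a*(q-p)" using P1 by (simp add: x_def)
  have qP: "1 + a*q = P*(1+x)" using Px by (simp add: P_def algebra_simps)
  have dq: "\<bar>q-p\<bar> \<le> 1" using p q by auto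
  have aqp: "\<bar>a*(q-p)\<bar> \<le> a" using dq a by (simp add: abs_mult mult_left_le)
  have xa: "\<bar>x\<bar> \<le> a"
  proof -
    have "\<bar>x\<bar> = \<bar>a*(q-p)\<bar>/P" using a P1 by (simp add: x_def)
    also have "\<dots> \<le> \<bar>a*(q-p)\<bar>"
    proof -
      have n: "0 \<le> \<bar>a*(q-p)\<bar>" by simp
      then show ?thesis using P1 by (simp add: divide_le_eq mult_le_cancel_left1)
    qed
    finally show ?thesis using aqp by simp
  qed
  then have xh: "\<bar>x\<bar> \<le> 1/2" using a by simp
  then have x1: "0 \<le> 1 + x" by (simp add: abs_le_iff)
  define r where "r = (1+x) powr l - 1 - l*x + l*(1-l)/2*x^2"
  have rb: "\<bar>r\<bar> \<le> 3*(l*(1-l))*\<bar>x\<bar>^3" unfolding r_def using taylor_powr3[OF l xh] .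
  have v: "(1+a*q) powr l * (1+a*p) powr (1-l) = P * (1 + l*x - l*(1-l)/2*x^2 + r)"
  proof -
    have "(1+a*q) powr l = P powr l * (1+x) powr l" using qP P1 x1 by (simp add: powr_mult)
    moreover have "P powr l * P powr (1-l) = P" using P1 by (simp add: powr_add[symmetric])
    ultimately have "(1+a*q) powr l * (1+a*p) powr (1-l) = P * (1+x) powr l"
      by (simp add: P_def[symmetric] mult.commute mult.left_commute)
    then show ?thesis by (simp add: r_def)
  qed
  have E: "(1+a*q) powr l * (1+a*p) powr (1-l) - (1 + a*((1-l)*p + l*q)) + l*(1-l)/2*a^2*(q-p)^2
     = l*(1-l)/2*(a*(q-p))^2*(1 - 1/P) + P*r"
  proof -
    have e1: "P*(1 + l*x - l*(1-l)/2*x^2 + r) = P + l*(P*x) - l*(1-l)/2*(P*x^2) + P*r"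
      by (simp add: algebra_simps)
    have e2': "P*x^2 = (P*x)^2/P" using P1 by (simp add: power2_eq_square)
    have e2: "P*x^2 = (a*(q-p))^2/P" using e2' by (simp only: Px)
    have e3: "P + l*(a*(q-p)) = 1 + a*((1-l)*p + l*q)" by (simp add: P_def algebra_simps)
    have e4: "(a*(q-p))^2 = a^2*(q-p)^2" by (simp add: power_mult_distrib)
    have e5: "l*(1-l)/2*(a*(q-p))^2*(1 - 1/P) = l*(1-l)/2*(a*(q-p))^2 - l*(1-l)/2*((a*(q-p))^2/P)"
      by (simp add: right_diff_distrib)
    have e6: "l*(1-l)/2*a^2*(q-p)^2 = l*(1-l)/2*(a*(q-p))^2" using e4 by simp
    show ?thesis unfolding v e1 e2 Px e5 e6 using e3 by linarith
  qed
  have Pb: "0 \<le> 1 - 1/P" "1 - 1/P \<le> a"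
  proof -
    show "0 \<le> 1 - 1/P" using P1 by simp
    have "1 - 1/P = a*p/P" using P1 by (simp add: P_def field_simps)
    also have "\<dots> \<le> a*p"
    proof -
      have n: "0 \<le> a*p" using a p by simp
      then show ?thesis using P1 by (simp add: divide_le_eq mult_le_cancel_left1)
    qed
    also have "\<dots> \<le> a" using a p by (simp add: mult_left_le)
    finally show "1 - 1/P \<le> a" .
  qed
  have dd: "(a*(q-p))^2 \<le> a^2" using aqp a by (metis abs_le_square_iff abs_of_nonneg)
  have t1: "\<bar>l*(1-l)/2*(a*(q-p))^2*(1 - 1/P)\<bar> \<le> l*(1-l)/2*a^3"
  proof -
    have "(a*(q-p))^2*(1 - 1/P) \<le> a^2*a" using dd Pb by (intro mult_mono) auto
    moreover have "0 \<le> (a*(q-p))^2*(1 - 1/P)" using Pb by simp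
    ultimately show ?thesis using l by (simp add: abs_mult power3_eq_cube power2_eq_square mult.assoc)
  qed
  have t2: "\<bar>P*r\<bar> \<le> 3*(l*(1-l))*a^3"
  proof -
    have "\<bar>P*r\<bar> \<le> P*(3*(l*(1-l))*\<bar>x\<bar>^3)" using rb P1 by (simp add: abs_mult)
    also have "\<dots> = 3*(l*(1-l))*(P*\<bar>x\<bar>^3)" by (simp add: mult.assoc mult.left_commute)
    also have "P*\<bar>x\<bar>^3 \<le> a^3"
    proof -
      have "\<bar>P*x\<bar>^3 \<le> a^3" unfolding Px using aqp by (intro power_mono) auto
      moreover have "\<bar>P*x\<bar>^3 = P^3*\<bar>x\<bar>^3" using P1 by (simp add: abs_mult power_mult_distrib)
      moreover have "P*\<bar>x\<bar>^3 \<le> P^3*\<bar>x\<bar>^3"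
      proof (rule mult_right_mono)
        show "P \<le> P^3" using P1 by (metis le_less_trans less_one not_le power_increasing_iff numeral_le_iff one_le_numeral power_one_right semiring_norm(70) order.refl power_increasing)
      qed simp
      ultimately show ?thesis by linarith
    qed
    then have "3*(l*(1-l))*(P*\<bar>x\<bar>^3) \<le> 3*(l*(1-l))*a^3" using l by (intro mult_left_mono) auto
    finally show ?thesis .
  qed
  have "\<bar>l*(1-l)/2*(a*(q-p))^2*(1 - 1/P) + P*r\<bar> \<le> l*(1-l)/2*a^3 + 3*(l*(1-l))*a^3"
  proof -
    have "\<bar>l*(1-l)/2*(a*(q-p))^2*(1 - 1/P) + P*r\<bar> \<le> \<bar>l*(1-l)/2*(a*(q-p))^2*(1 - 1/P)\<bar> + \<bar>P*r\<bar>"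
      by (rule abs_triangle_ineq)
    then show ?thesis using t1 t2 by linarith
  qed
  also have "\<dots> \<le> 4*(l*(1-l))*a^3"
  proof -
    have X: "0 \<le> (l*(1-l))*a^3" using l a by simp
    have "l*(1-l)/2*a^3 + 3*(l*(1-l))*a^3 = 7/2*((l*(1-l))*a^3)" by (simp add: field_simps)
    moreover have "4*(l*(1-l))*a^3 = 4*((l*(1-l))*a^3)" by simp
    ultimately show ?thesis using X by linarith
  qed
  finally show ?thesis unfolding E .
qed


definition V :: "real \<Rightarrow> real \<Rightarrow> real \<Rightarrow> real \<Rightarrow> real" where
  "V a l p q = (1+a*q) powr l * (1+a*p) powr (1-l)"

definition sig :: "real \<Rightarrow> real \<Rightarrow> real \<Rightarrow> real \<Rightarrow> real" where
  "sig a l p q = 1 + a*((1-l)*p + l*q)"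

lemma V_exp:
  assumes "0 < l" "l < 1" "0 \<le> a" "a \<le> 1/2" "0 \<le> p" "p \<le> 1" "0 \<le> q" "q \<le> 1" "(q-p)^2 = d2"
  shows "\<bar>V a l p q - sig a l p q + l*(1-l)/2*a^2*d2\<bar> \<le> 4*(l*(1-l)*a^3)"
  using vert_exp[OF assms(1-8)] assms(9) unfolding V_def sig_def by (simp add: mult.assoc)

lemma abs_div_bound:
  fixes x b k :: real
  assumes "x*k = y" "\<bar>y\<bar> \<le> b" "1 \<le> k"
  shows "\<bar>x\<bar> \<le> b"
proof -
  have "\<bar>x\<bar> \<le> \<bar>x\<bar>*k" using assms(3) by (simp add: mult_le_cancel_left1)
  also have "\<dots> = \<bar>x*k\<bar>" using assms(3) by (simp add: abs_mult)
  also have "\<dots> = \<bar>y\<bar>" using assms(1) by simp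
  finally show ?thesis using assms(2) by simp
qed


lemma cvx01:
  fixes l p q :: real
  assumes "0 < l" "l < 1" "0 \<le> p" "p \<le> 1" "0 \<le> q" "q \<le> 1"
  shows "0 \<le> (1-l)*p + l*q" "(1-l)*p + l*q \<le> 1"
proof -
  have "(1-l)*p \<le> 1-l" using assms by (intro mult_left_le) auto
  moreover have "l*q \<le> l" using assms by (intro mult_left_le) auto
  ultimately show "(1-l)*p + l*q \<le> 1" by simp
  show "0 \<le> (1-l)*p + l*q" using assms by simp
qed

lemma min_shift:
  fixes x y k :: real
  shows "min x y - 1 + k = min (x - 1 + k) (y - 1 + k)"
  by (simp add: min_def)

lemma inner_vertex:
  fixes l a \<delta> z pS qS p q zt k0 G kw kd :: real
  assumes l: "0 < l" "l < 1" and a: "0 < a" "a \<le> 1/2"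
    and dl: "0 < \<delta>" "\<delta> \<le> 1" and z: "0 \<le> z" "z < 1"
    and pS: "0 \<le> pS" "qS = pS + \<delta>" "qS + z \<le> 1"
    and p: "0 \<le> p" "p \<le> 1" and q: "0 \<le> q" "q \<le> 1" and d: "\<bar>q - p\<bar> \<le> \<delta>"
    and zt: "\<bar>zt - z*p\<bar> \<le> z"
    and k0: "k0 \<le> \<delta>^2 - (q-p)^2" and ak: "a*200 \<le> k0*(1-z)"
    and G: "G = min ((V a l pS qS + V a l (1-pS) (1-qS))/(2+a))
                     ((V a l (pS+z) (qS+z) + V a l (1-pS-z) (1-qS-z))/(2+a))"
    and kw: "kw = (if z = 0 then 0 else (V a l (pS+z) (qS+z) - V a l pS qS - a*z*G)/(a*z*(1-z)))"
    and kd: "kd = (V a l pS qS - G * sig a l pS qS + kw*a*z*pS)/(a*\<delta>)"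
  shows "G * sig a l p q + kd*a*(q-p) + kw*a*(zt - z*p) \<le> V a l p q"
proof -
  define c where "c = l*(1-l)/2"
  define e where "e = l*(1-l)*a^3"
  have c0: "0 \<le> c" using l by (simp add: c_def)
  have e0: "0 \<le> e" using l a by (simp add: e_def)
  have ce: "c*a^3 = e/2" by (simp add: c_def e_def)
  have a2: "0 \<le> a" "a \<le> 1/2" using a by auto
  have d2: "\<delta>^2 \<le> 1" using dl by (simp add: power_le_one)
  have cad: "0 \<le> c*a^2*\<delta>^2" "c*a^2*\<delta>^2*a \<le> e/2" "0 \<le> c*a^2*\<delta>^2*a"
  proof -
    show "0 \<le> c*a^2*\<delta>^2" using c0 by simp
    then show "0 \<le> c*a^2*\<delta>^2*a" using a by simp
    have "c*a^2*\<delta>^2*a = (c*a^3)*\<delta>^2" by (simp add: power3_eq_cube power2_eq_square)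
    also have "\<dots> \<le> c*a^3" using d2 c0 a by (simp add: mult_left_le)
    finally show "c*a^2*\<delta>^2*a \<le> e/2" using ce by simp
  qed
  define r0 where "r0 = V a l pS qS - sig a l pS qS + c*a^2*\<delta>^2"
  define r0c where "r0c = V a l (1-pS) (1-qS) - sig a l (1-pS) (1-qS) + c*a^2*\<delta>^2"
  define r1 where "r1 = V a l (pS+z) (qS+z) - sig a l (pS+z) (qS+z) + c*a^2*\<delta>^2"
  define r1c where "r1c = V a l (1-pS-z) (1-qS-z) - sig a l (1-pS-z) (1-qS-z) + c*a^2*\<delta>^2"
  define rT where "rT = V a l p q - sig a l p q + c*a^2*(q-p)^2"
  have b0: "\<bar>r0\<bar> \<le> 4*e" unfolding r0_def c_def e_def
    by (rule V_exp) (use l a2 pS dl z in auto)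
  have b0c: "\<bar>r0c\<bar> \<le> 4*e" unfolding r0c_def c_def e_def
    by (rule V_exp) (use l a2 pS dl z in \<open>auto simp: power2_commute\<close>)
  have b1: "\<bar>r1\<bar> \<le> 4*e" unfolding r1_def c_def e_def
    by (rule V_exp) (use l a2 pS dl z in auto)
  have b1c: "\<bar>r1c\<bar> \<le> 4*e" unfolding r1c_def c_def e_def
    by (rule V_exp) (use l a2 pS dl z in \<open>auto simp: power2_commute\<close>)
  have bT: "\<bar>rT\<bar> \<le> 4*e" unfolding rT_def c_def e_def
    by (rule V_exp) (use l a2 p q in auto)
  have s0: "sig a l pS qS + sig a l (1-pS) (1-qS) = 2 + a" by (simp add: sig_def algebra_simps)
  have s1: "sig a l (pS+z) (qS+z) + sig a l (1-pS-z) (1-qS-z) = 2 + a" by (simp add: sig_def algebra_simps)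
  have s01: "sig a l (pS+z) (qS+z) = sig a l pS qS + a*z" by (simp add: sig_def algebra_simps)
  have sg0: "1 \<le> sig a l pS qS" "sig a l pS qS \<le> 1 + a"
  proof -
    have "0 \<le> (1-l)*pS + l*qS" "(1-l)*pS + l*qS \<le> 1"
      by (rule cvx01; use l pS dl z in linarith)+
    then show "1 \<le> sig a l pS qS" "sig a l pS qS \<le> 1 + a" using a by (auto simp: sig_def mult_left_le)
  qed
  have sgT: "1 \<le> sig a l p q" "sig a l p q \<le> 1 + a"
  proof -
    have "0 \<le> (1-l)*p + l*q" "(1-l)*p + l*q \<le> 1"
      by (rule cvx01; use l p q in linarith)+
    then show "1 \<le> sig a l p q" "sig a l p q \<le> 1 + a" using a by (auto simp: sig_def mult_left_le)
  qed
  define EG where "EG = G - 1 + c*a^2*\<delta>^2"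
  have EGb: "\<bar>EG\<bar> \<le> 9*e"
  proof -
    define B1 where "B1 = (V a l pS qS + V a l (1-pS) (1-qS))/(2+a)"
    define B2 where "B2 = (V a l (pS+z) (qS+z) + V a l (1-pS-z) (1-qS-z))/(2+a)"
    define E1 where "E1 = B1 - 1 + c*a^2*\<delta>^2"
    define E2 where "E2 = B2 - 1 + c*a^2*\<delta>^2"
    have a2: "2 + a \<noteq> 0" using a by simp
    have B1e: "B1*(2+a) = V a l pS qS + V a l (1-pS) (1-qS)" unfolding B1_def using a2 by simp
    have B2e: "B2*(2+a) = V a l (pS+z) (qS+z) + V a l (1-pS-z) (1-qS-z)" unfolding B2_def using a2 by simp
    have "E1*(2+a) = B1*(2+a) - (2+a) + c*a^2*\<delta>^2*(2+a)" unfolding E1_def by (simp add: algebra_simps)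
    also have "\<dots> = c*a^2*\<delta>^2*a + r0 + r0c"
      unfolding B1e r0_def r0c_def using s0 by (simp add: algebra_simps)
    finally have e1: "E1*(2+a) = c*a^2*\<delta>^2*a + r0 + r0c" .
    have bb1: "\<bar>c*a^2*\<delta>^2*a + r0 + r0c\<bar> \<le> 9*e" using cad b0 b0c e0 by (simp only: abs_le_iff) (elim conjE; intro conjI; linarith)
    have 1: "\<bar>E1\<bar> \<le> 9*e" by (rule abs_div_bound[OF e1 bb1]) (use a in simp)
    have "E2*(2+a) = B2*(2+a) - (2+a) + c*a^2*\<delta>^2*(2+a)" unfolding E2_def by (simp add: algebra_simps)
    also have "\<dots> = c*a^2*\<delta>^2*a + r1 + r1c"
      unfolding B2e r1_def r1c_def using s1 by (simp add: algebra_simps)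
    finally have e2: "E2*(2+a) = c*a^2*\<delta>^2*a + r1 + r1c" .
    have bb2: "\<bar>c*a^2*\<delta>^2*a + r1 + r1c\<bar> \<le> 9*e" using cad b1 b1c e0 by (simp only: abs_le_iff) (elim conjE; intro conjI; linarith)
    have 2: "\<bar>E2\<bar> \<le> 9*e" by (rule abs_div_bound[OF e2 bb2]) (use a in simp)
    have GB: "G = min B1 B2" unfolding G B1_def B2_def ..
    have "EG = min E1 E2" unfolding EG_def E1_def E2_def GB by (rule min_shift)
    then show ?thesis using 1 2 by (simp add: min_def)
  qed
  define X where "X = V a l (pS+z) (qS+z) - V a l pS qS - a*z*G"
  have Xe: "X = r1 - r0 + a*z*(c*a^2*\<delta>^2) - a*z*EG"
    unfolding X_def r1_def r0_def EG_def using s01 by (simp add: algebra_simps)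
  have Xb: "\<bar>X\<bar> \<le> 13*e"
  proof -
    have "a*z*(c*a^2*\<delta>^2) = z*(c*a^2*\<delta>^2*a)" by (simp add: algebra_simps)
    also have "\<dots> \<le> c*a^2*\<delta>^2*a" using cad(3) z by (intro mult_left_le_one_le) auto
    finally have "a*z*(c*a^2*\<delta>^2) \<le> e/2" using cad(2) by linarith
    moreover have "0 \<le> a*z*(c*a^2*\<delta>^2)" using cad(1) z a by simp
    moreover have "\<bar>a*z*EG\<bar> \<le> 9*e/2"
    proof -
      have "\<bar>a*z*EG\<bar> = (a*z)*\<bar>EG\<bar>" using a z by (simp add: abs_mult)
      also have "\<dots> \<le> (1/2)*(9*e)"
      proof (rule mult_mono)
        have "a*z \<le> a*1" using a z by (intro mult_left_mono) auto
        then show "a*z \<le> 1/2" using a by linarith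
      qed (use a z EGb e0 in auto)
      finally show ?thesis by simp
    qed
    ultimately show ?thesis unfolding Xe using b0 b1 by (simp only: abs_le_iff) (elim conjE; intro conjI; linarith)
  qed
  have kwb: "\<And>u. \<bar>u\<bar> \<le> z \<Longrightarrow> (1-z)*\<bar>kw*a*u\<bar> \<le> 13*e"
  proof -
    fix u assume u: "\<bar>u\<bar> \<le> z"
    show "(1-z)*\<bar>kw*a*u\<bar> \<le> 13*e"
    proof (cases "z = 0")
      case True then show ?thesis using kw e0 by simp
    next
      case False
      then have zp: "0 < z" using z by simp
      have "kw*a*u*(1-z) = X*(u/z)" unfolding kw X_def[symmetric] using False a z by (simp add: field_simps)
      then have "(1-z)*\<bar>kw*a*u\<bar> = \<bar>X\<bar>*(\<bar>u\<bar>/z)" using z zp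
        by (metis abs_divide abs_mult abs_of_pos diff_gt_0_iff_gt mult.commute)
      also have "\<dots> \<le> \<bar>X\<bar>*1" using u zp by (intro mult_left_mono) auto
      finally show ?thesis using Xb by simp
    qed
  qed
  have kw0: "(1-z)*\<bar>kw*a*(0 - z*pS)\<bar> \<le> 13*e"
    by (rule kwb) (use pS dl z in \<open>auto simp: abs_mult mult_left_le\<close>)
  have kwT: "(1-z)*\<bar>kw*a*(zt - z*p)\<bar> \<le> 13*e" by (rule kwb[OF zt])
  have Y: "V a l pS qS - G * sig a l pS qS = c*a^2*\<delta>^2*(sig a l pS qS - 1) + r0 - sig a l pS qS * EG"
    unfolding r0_def EG_def by (simp add: algebra_simps)
  have Yb: "\<bar>V a l pS qS - G * sig a l pS qS\<bar> \<le> 18*e"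
  proof -
    have "c*a^2*\<delta>^2*(sig a l pS qS - 1) \<le> c*a^2*\<delta>^2*a" using sg0 cad(1) by (intro mult_left_mono) auto
    moreover have "0 \<le> c*a^2*\<delta>^2*(sig a l pS qS - 1)" using sg0 cad(1) by simp
    moreover have "\<bar>sig a l pS qS * EG\<bar> \<le> (3/2)*(9*e)"
    proof -
      have "\<bar>sig a l pS qS * EG\<bar> = sig a l pS qS * \<bar>EG\<bar>" using sg0 by (simp add: abs_mult)
      also have "\<dots> \<le> (3/2)*(9*e)" using sg0 a EGb by (intro mult_mono) auto
      finally show ?thesis .
    qed
    ultimately show ?thesis unfolding Y using cad b0 by (simp only: abs_le_iff) (elim conjE; intro conjI; linarith)
  qed
  have kdb: "(1-z)*\<bar>kd*a*\<delta>\<bar> \<le> 31*e"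
  proof -
    have "kd*a*\<delta> = V a l pS qS - G * sig a l pS qS + kw*a*z*pS" unfolding kd using a dl by simp
    moreover have "\<bar>kw*a*(0 - z*pS)\<bar> = \<bar>kw*a*z*pS\<bar>"
      by (metis abs_minus_cancel diff_0 mult.assoc mult_minus_right)
    moreover have "\<bar>V a l pS qS - G * sig a l pS qS + kw*a*z*pS\<bar> \<le> \<bar>V a l pS qS - G * sig a l pS qS\<bar> + \<bar>kw*a*z*pS\<bar>"
      by (rule abs_triangle_ineq)
    ultimately have "\<bar>kd*a*\<delta>\<bar> \<le> 18*e + \<bar>kw*a*(0 - z*pS)\<bar>" using Yb by simp
    then have "(1-z)*\<bar>kd*a*\<delta>\<bar> \<le> (1-z)*(18*e) + (1-z)*\<bar>kw*a*(0 - z*pS)\<bar>"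
      using z by (simp add: distrib_left[symmetric] mult_left_mono)
    also have "\<dots> \<le> 18*e + 13*e"
    proof -
      have "(1-z)*(18*e) \<le> 18*e" using z e0 by (intro mult_left_le_one_le) auto
      then show ?thesis using kw0 by linarith
    qed
    finally show ?thesis by simp
  qed
  have kdT: "(1-z)*\<bar>kd*a*(q-p)\<bar> \<le> 31*e"
  proof -
    have "\<bar>kd*a*(q-p)\<bar> \<le> \<bar>kd*a*\<delta>\<bar>" using d dl by (simp add: abs_mult mult_left_mono)
    then have "(1-z)*\<bar>kd*a*(q-p)\<bar> \<le> (1-z)*\<bar>kd*a*\<delta>\<bar>" using z by (intro mult_left_mono) auto
    then show ?thesis using kdb by simp
  qed
  have main: "V a l p q - (G * sig a l p q + kd*a*(q-p) + kw*a*(zt - z*p))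
      = c*a^2*\<delta>^2* sig a l p q - c*a^2*(q-p)^2 + rT - sig a l p q * EG - kd*a*(q-p) - kw*a*(zt - z*p)"
    unfolding rT_def EG_def by (simp add: algebra_simps)
  have m1: "c*a^2*\<delta>^2* sig a l p q - c*a^2*(q-p)^2 \<ge> c*a^2*k0"
  proof -
    have "c*a^2*\<delta>^2 \<le> c*a^2*\<delta>^2* sig a l p q" using sgT cad(1) by (simp add: mult_le_cancel_left1)
    moreover have "c*a^2*k0 \<le> c*a^2*(\<delta>^2 - (q-p)^2)" using k0 c0 by (simp add: mult_left_mono)
    ultimately show ?thesis by (simp add: algebra_simps)
  qed
  have m2: "\<bar>sig a l p q * EG\<bar> \<le> (3/2)*(9*e)"
  proof -
    have "\<bar>sig a l p q * EG\<bar> = sig a l p q * \<bar>EG\<bar>" using sgT by (simp add: abs_mult)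
    also have "\<dots> \<le> (3/2)*(9*e)" using sgT a EGb by (intro mult_mono) auto
    finally show ?thesis .
  qed
  have k0p: "0 \<le> k0"
  proof -
    have "0 < k0*(1-z)" using ak a by linarith
    then show ?thesis using z by (simp add: zero_less_mult_iff)
  qed
  have big: "(1-z)*(c*a^2*k0) \<ge> 100*e"
  proof -
    have "(1-z)*(c*a^2*k0) = (c*a^2)*(k0*(1-z))" by simp
    also have "\<dots> \<ge> (c*a^2)*(a*200)" using ak c0 by (intro mult_left_mono) auto
    finally show ?thesis using ce by (simp add: power3_eq_cube power2_eq_square algebra_simps)
  qed
  define W where "W = V a l p q - (G * sig a l p q + kd*a*(q-p) + kw*a*(zt - z*p))"
  have "W \<ge> c*a^2*k0 - 4*e - (3/2)*(9*e) - \<bar>kd*a*(q-p)\<bar> - \<bar>kw*a*(zt - z*p)\<bar>"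
    unfolding W_def main using m1 m2 bT abs_ge_self[of "kd*a*(q-p)"] abs_ge_self[of "kw*a*(zt - z*p)"] by (simp only: abs_le_iff) (elim conjE; linarith)
  then have "(1-z)*(c*a^2*k0 - 4*e - (3/2)*(9*e) - \<bar>kd*a*(q-p)\<bar> - \<bar>kw*a*(zt - z*p)\<bar>) \<le> (1-z)*W"
    by (rule mult_left_mono) (use z in auto)
  then have "(1-z)*W \<ge> (1-z)*(c*a^2*k0) - (1-z)*(4*e + (3/2)*(9*e)) - (1-z)*\<bar>kd*a*(q-p)\<bar> - (1-z)*\<bar>kw*a*(zt - z*p)\<bar>"
    by (simp add: algebra_simps)
  moreover have "(1-z)*(4*e + (3/2)*(9*e)) \<le> 4*e + (3/2)*(9*e)" using z e0 by (intro mult_left_le_one_le) auto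
  ultimately have "(1-z)*W \<ge> 0" using big kdT kwT e0 by linarith
  then have "W \<ge> 0" using z by (simp add: zero_le_mult_iff)
  then show ?thesis unfolding W_def by simp
qed


definition tg :: "real \<Rightarrow> real \<Rightarrow> real \<Rightarrow> real \<Rightarrow> real" where
  "tg l k s t = (1-l) * k powr l * s + l * k powr (l-1) * t"

lemma young_tg:
  fixes l k s t :: real
  assumes l: "0 < l" "l < 1" and k: "0 < k" and s: "0 < s" and t: "0 < t"
  shows "t powr l * s powr (1-l) \<le> tg l k s t"
proof -
  have "(k powr (l-1) * t) powr l * (k powr l * s) powr (1-l) \<le> l*(k powr (l-1) * t) + (1-l)*(k powr l * s)"
    using l k s t by (intro Youngs_inequality_0) auto
  moreover have "(k powr (l-1) * t) powr l * (k powr l * s) powr (1-l) = t powr l * s powr (1-l)"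
  proof -
    have "(k powr (l-1) * t) powr l * (k powr l * s) powr (1-l)
        = (k powr ((l-1)*l) * k powr (l*(1-l))) * (t powr l * s powr (1-l))"
      using k s t by (simp add: powr_mult powr_powr mult_ac)
    also have "k powr ((l-1)*l) * k powr (l*(1-l)) = 1"
      using k by (simp add: powr_add[symmetric] algebra_simps)
    finally show ?thesis by simp
  qed
  ultimately show ?thesis unfolding tg_def by (simp add: algebra_simps)
qed

lemma tg_eq:
  fixes l s t :: real
  assumes s: "0 < s" and t: "0 < t"
  shows "tg l (t/s) s t = t powr l * s powr (1-l)"
proof -
  have 1: "(t/s) powr l * s = t powr l * s powr (1-l)"
    using s t by (simp add: powr_divide powr_diff field_simps)
  have 2: "(t/s) powr (l-1) * t = t powr l * s powr (1-l)"
    using s t by (simp add: powr_divide powr_diff field_simps powr_minus)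
  show ?thesis unfolding tg_def
    using 1 2 by (simp add: mult.assoc) (simp add: algebra_simps)
qed

lemma tg_lin:
  "tg l k ((1-th)* s0 + th* s1) ((1-th)*t0 + th*t1) = (1-th)*tg l k s0 t0 + th*tg l k s1 t1"
  unfolding tg_def by (simp add: algebra_simps)

lemma nu_concave:
  fixes l th s0 t0 s1 t1 :: real
  assumes l: "0 < l" "l < 1" and th: "0 \<le> th" "th \<le> 1"
    and pos: "0 < s0" "0 < t0" "0 < s1" "0 < t1"
  shows "(1-th)*(t0 powr l * s0 powr (1-l)) + th*(t1 powr l * s1 powr (1-l))
          \<le> ((1-th)*t0 + th*t1) powr l * ((1-th)* s0 + th* s1) powr (1-l)"
proof -
  define s where "s = (1-th)* s0 + th* s1"
  define t where "t = (1-th)*t0 + th*t1"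
  have sp: "0 < s"
  proof (cases "th = 0")
    case True then show ?thesis unfolding s_def using pos by simp
  next
    case False then have "0 < th" using th by simp
    then show ?thesis unfolding s_def using th pos by (intro add_nonneg_pos) auto
  qed
  have tp: "0 < t"
  proof (cases "th = 0")
    case True then show ?thesis unfolding t_def using pos by simp
  next
    case False then have "0 < th" using th by simp
    then show ?thesis unfolding t_def using th pos by (intro add_nonneg_pos) auto
  qed
  have kp: "0 < t/s" using sp tp by simp
  have "(1-th)*(t0 powr l * s0 powr (1-l)) + th*(t1 powr l * s1 powr (1-l))
      \<le> (1-th)*tg l (t/s) s0 t0 + th*tg l (t/s) s1 t1"
    using young_tg[OF l kp pos(1,2)] young_tg[OF l kp pos(3,4)] th
    by (intro add_mono mult_left_mono) auto
  also have "\<dots> = tg l (t/s) s t" unfolding s_def t_def by (rule tg_lin[symmetric])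
  also have "\<dots> = t powr l * s powr (1-l)" by (rule tg_eq[OF sp tp])
  finally show ?thesis unfolding s_def t_def .
qed


definition Lf :: "real \<Rightarrow> real \<Rightarrow> real \<Rightarrow> real \<Rightarrow> real \<Rightarrow> real \<Rightarrow> real \<Rightarrow> real \<Rightarrow> real \<Rightarrow> real" where
  "Lf a l z G kd kw p q zt = G * sig a l p q + kd*a*(q-p) + kw*a*(zt - z*p)"

lemma Lf_affine:
  "Lf a l z G kd kw ((1-th)*p0 + th*p1) ((1-th)*q0 + th*q1) ((1-th)*z0 + th*z1)
   = (1-th)*Lf a l z G kd kw p0 q0 z0 + th*Lf a l z G kd kw p1 q1 z1"
  unfolding Lf_def sig_def by (simp add: algebra_simps)

lemma V_concave:
  fixes l a th p0 q0 p1 q1 :: real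
  assumes l: "0 < l" "l < 1" and th: "0 \<le> th" "th \<le> 1" and a: "0 \<le> a"
    and pos: "0 \<le> p0" "0 \<le> q0" "0 \<le> p1" "0 \<le> q1"
  shows "(1-th)*V a l p0 q0 + th*V a l p1 q1 \<le> V a l ((1-th)*p0 + th*p1) ((1-th)*q0 + th*q1)"
proof -
  have e1: "1 + a*((1-th)*p0 + th*p1) = (1-th)*(1+a*p0) + th*(1+a*p1)" by (simp add: algebra_simps)
  have e2: "1 + a*((1-th)*q0 + th*q1) = (1-th)*(1+a*q0) + th*(1+a*q1)" by (simp add: algebra_simps)
  show ?thesis unfolding V_def e1 e2
    by (rule nu_concave[OF l th]) (use a pos in \<open>auto intro: add_pos_nonneg\<close>)
qed

lemma edge_vertex:
  fixes l a \<delta> z pS qS t G kw kd :: real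
  assumes l: "0 < l" "l < 1" and a: "0 < a" "a \<le> 1/2"
    and dl: "0 < \<delta>" and z: "0 \<le> z"
    and pS: "0 \<le> pS" "qS = pS + \<delta>" "qS + z \<le> 1"
    and t: "0 \<le> t" "t \<le> z"
    and G: "G = min ((V a l pS qS + V a l (1-pS) (1-qS))/(2+a))
                     ((V a l (pS+z) (qS+z) + V a l (1-pS-z) (1-qS-z))/(2+a))"
    and kw: "kw = (if z = 0 then 0 else (V a l (pS+z) (qS+z) - V a l pS qS - a*z*G)/(a*z*(1-z)))"
    and kd: "kd = (V a l pS qS - G * sig a l pS qS + kw*a*z*pS)/(a*\<delta>)"
    and z1: "z < 1"
  shows "Lf a l z G kd kw (pS+t) (qS+t) t \<le> V a l (pS+t) (qS+t)"
    and "Lf a l z G kd kw (1-pS-z+t) (1-qS-z+t) t \<le> V a l (1-pS-z+t) (1-qS-z+t)"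
proof -
  let ?L = "Lf a l z G kd kw"
  have A0: "?L pS qS 0 = V a l pS qS"
  proof -
    have "kd*a*\<delta> = V a l pS qS - G * sig a l pS qS + kw*a*z*pS" unfolding kd using a dl by simp
    then show ?thesis unfolding Lf_def using pS(2) by (simp add: algebra_simps)
  qed
  have A1: "?L (pS+z) (qS+z) z = V a l (pS+z) (qS+z)"
  proof (cases "z = 0")
    case True then show ?thesis using A0 by simp
  next
    case False
    have "kw*(a*z*(1-z)) = V a l (pS+z) (qS+z) - V a l pS qS - a*z*G"
      unfolding kw using False a z z1 by simp
    moreover have "?L (pS+z) (qS+z) z = ?L pS qS 0 + a*z*G + kw*(a*z*(1-z))"
      unfolding Lf_def sig_def by (simp add: algebra_simps)
    ultimately show ?thesis using A0 by simp
  qed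
  define B1 where "B1 = (V a l pS qS + V a l (1-pS) (1-qS))/(2+a)"
  define B2 where "B2 = (V a l (pS+z) (qS+z) + V a l (1-pS-z) (1-qS-z))/(2+a)"
  have GB1: "(2+a)*G \<le> V a l pS qS + V a l (1-pS) (1-qS)"
  proof -
    have "G \<le> B1" unfolding G B1_def by simp
    then have "(2+a)*G \<le> (2+a)*B1" using a by (intro mult_left_mono) auto
    then show ?thesis unfolding B1_def using a by simp
  qed
  have GB2: "(2+a)*G \<le> V a l (pS+z) (qS+z) + V a l (1-pS-z) (1-qS-z)"
  proof -
    have "G \<le> B2" unfolding G B2_def by simp
    then have "(2+a)*G \<le> (2+a)*B2" using a by (intro mult_left_mono) auto
    then show ?thesis unfolding B2_def using a by simp
  qed
  have N0: "?L (1-pS-z) (1-qS-z) 0 \<le> V a l (1-pS-z) (1-qS-z)"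
  proof -
    have "?L (1-pS-z) (1-qS-z) 0 + ?L (pS+z) (qS+z) z = (2+a)*G"
      unfolding Lf_def sig_def by (simp add: algebra_simps)
    then show ?thesis using A1 GB2 by simp
  qed
  have N1: "?L (1-pS-z+z) (1-qS-z+z) z \<le> V a l (1-pS-z+z) (1-qS-z+z)"
  proof -
    have "?L (1-pS-z+z) (1-qS-z+z) z + ?L pS qS 0 = (2+a)*G"
      unfolding Lf_def sig_def by (simp add: algebra_simps)
    then show ?thesis using A0 GB1 by simp
  qed
  have q1: "0 \<le> 1-pS-z" "0 \<le> 1-qS-z" "0 \<le> qS" using pS dl by auto
  show "?L (pS+t) (qS+t) t \<le> V a l (pS+t) (qS+t)"
  proof (cases "z = 0")
    case True then have "t = 0" using t by simp
    then show ?thesis using A0 by simp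
  next
    case False
    define th where "th = t/z"
    have th: "0 \<le> th" "th \<le> 1" using t z False by (auto simp: th_def divide_le_eq_1)
    have tz: "t = th*z" using False by (simp add: th_def)
    have m1: "pS + t = (1-th)*pS + th*(pS+z)" "qS + t = (1-th)*qS + th*(qS+z)" "t = (1-th)*0 + th*z"
      using tz by (auto simp: algebra_simps)
    have "?L (pS+t) (qS+t) t = (1-th)*?L pS qS 0 + th*?L (pS+z) (qS+z) z"
      unfolding m1(1,2) by (subst m1(3)) (rule Lf_affine)
    also have "\<dots> = (1-th)*V a l pS qS + th*V a l (pS+z) (qS+z)" using A0 A1 by simp
    also have "\<dots> \<le> V a l ((1-th)*pS + th*(pS+z)) ((1-th)*qS + th*(qS+z))"
      by (rule V_concave[OF l th]) (use a pS q1 z in auto)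
    finally show ?thesis unfolding m1(1,2) .
  qed
  show "?L (1-pS-z+t) (1-qS-z+t) t \<le> V a l (1-pS-z+t) (1-qS-z+t)"
  proof (cases "z = 0")
    case True then have "t = 0" using t by simp
    then show ?thesis using N0 True by simp
  next
    case False
    define th where "th = t/z"
    have th: "0 \<le> th" "th \<le> 1" using t z False by (auto simp: th_def divide_le_eq_1)
    have tz: "t = th*z" using False by (simp add: th_def)
    have m1: "1-pS-z+t = (1-th)*(1-pS-z) + th*(1-pS-z+z)" "1-qS-z+t = (1-th)*(1-qS-z) + th*(1-qS-z+z)"
      "t = (1-th)*0 + th*z"
      using tz by (auto simp: algebra_simps)
    have "?L (1-pS-z+t) (1-qS-z+t) t = (1-th)*?L (1-pS-z) (1-qS-z) 0 + th*?L (1-pS-z+z) (1-qS-z+z) z"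
      unfolding m1(1,2) by (subst m1(3)) (rule Lf_affine)
    also have "\<dots> \<le> (1-th)*V a l (1-pS-z) (1-qS-z) + th*V a l (1-pS-z+z) (1-qS-z+z)"
      using N0 N1 th by (intro add_mono mult_left_mono) auto
    also have "\<dots> \<le> V a l ((1-th)*(1-pS-z) + th*(1-pS-z+z)) ((1-th)*(1-qS-z) + th*(1-qS-z+z))"
      by (rule V_concave[OF l th]) (use a pS q1 z in auto)
    finally show ?thesis unfolding m1(1,2) .
  qed
qed


locale twod =
  fixes P0 P1 :: "'x::finite \<Rightarrow> real"
  assumes d0: "is_distr P0" and d1: "is_distr P1"
begin

definition "Sx = {x. P1 x < P0 x}"
definition "Zx = {x. P0 x = P1 x}"
definition "Nx = {x. P0 x < P1 x}"
definition "D x = P0 x - P1 x"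
definition "dl = sum D Sx"
definition "zz = sum P1 Zx"
definition "pS = sum P1 Sx"
definition "qS = sum P0 Sx"

lemma P0nn: "0 \<le> P0 x" and P1nn: "0 \<le> P1 x" and P0s: "sum P0 UNIV = 1" and P1s: "sum P1 UNIV = 1"
  using d0 d1 unfolding is_distr_def by auto

lemma sum01:
  fixes T :: "'x set"
  shows "0 \<le> sum P1 T" "sum P1 T \<le> 1" "0 \<le> sum P0 T" "sum P0 T \<le> 1"
proof -
  show "0 \<le> sum P1 T" "0 \<le> sum P0 T" using P0nn P1nn by (auto intro: sum_nonneg)
  have "sum P1 T \<le> sum P1 UNIV" using P1nn by (intro sum_mono2) auto
  then show "sum P1 T \<le> 1" using P1s by simp
  have "sum P0 T \<le> sum P0 UNIV" using P0nn by (intro sum_mono2) auto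
  then show "sum P0 T \<le> 1" using P0s by simp
qed

lemma part: "Sx \<inter> Zx = {}" "Sx \<inter> Nx = {}" "Zx \<inter> Nx = {}" "Sx \<union> Zx \<union> Nx = UNIV"
  unfolding Sx_def Zx_def Nx_def by auto

lemma sumD_split: "sum f T = sum f (T \<inter> Sx) + sum f (T \<inter> Zx) + sum f (T \<inter> Nx)"
proof -
  have "T = (T \<inter> Sx) \<union> (T \<inter> Zx) \<union> (T \<inter> Nx)" using part by blast
  then have "sum f T = sum f ((T \<inter> Sx) \<union> (T \<inter> Zx) \<union> (T \<inter> Nx))" by simp
  also have "\<dots> = sum f ((T \<inter> Sx) \<union> (T \<inter> Zx)) + sum f (T \<inter> Nx)"
    using part by (intro sum.union_disjoint) auto
  also have "sum f ((T \<inter> Sx) \<union> (T \<inter> Zx)) = sum f (T \<inter> Sx) + sum f (T \<inter> Zx)"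
    using part by (intro sum.union_disjoint) auto
  finally show ?thesis .
qed

lemma DZ: "sum D (T \<inter> Zx) = 0" unfolding D_def Zx_def by (intro sum.neutral) auto

lemma sumD: "sum D T = sum P0 T - sum P1 T" unfolding D_def by (simp add: sum_subtractf)

lemma DN: "sum D Nx = - dl"
proof -
  have "sum D UNIV = 0" using P0s P1s by (simp add: sumD)
  then show ?thesis using sumD_split[of D UNIV] DZ[of UNIV] unfolding dl_def by simp
qed

lemma DS_bounds: "0 \<le> sum D (T \<inter> Sx)" "sum D (T \<inter> Sx) \<le> dl"
proof -
  show "0 \<le> sum D (T \<inter> Sx)" unfolding D_def Sx_def by (intro sum_nonneg) auto
  show "sum D (T \<inter> Sx) \<le> dl" unfolding dl_def D_def Sx_def by (intro sum_mono2) auto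
qed

lemma DN_bounds: "sum D (T \<inter> Nx) \<le> 0" "- dl \<le> sum D (T \<inter> Nx)"
proof -
  show "sum D (T \<inter> Nx) \<le> 0" unfolding D_def Nx_def by (intro sum_nonpos) auto
  have "sum D Nx \<le> sum D (T \<inter> Nx)"
  proof -
    have "sum D Nx = sum D (T \<inter> Nx) + sum D (Nx - T)"
      using sum.Int_Diff[of Nx D T] by (simp add: Int_commute)
    moreover have "sum D (Nx - T) \<le> 0" unfolding D_def Nx_def by (intro sum_nonpos) auto
    ultimately show ?thesis by simp
  qed
  then show "- dl \<le> sum D (T \<inter> Nx)" using DN by simp
qed

lemma dl_nn: "0 \<le> dl" using DS_bounds[of UNIV] by simp

lemma sumD_T: "sum D T = sum D (T \<inter> Sx) + sum D (T \<inter> Nx)"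
  using sumD_split[of D T] DZ[of T] by simp

lemma absD: "\<bar>sum D T\<bar> \<le> dl"
  using sumD_T[of T] DS_bounds[of T] DN_bounds[of T] by linarith

lemma DS_full: assumes "sum D (T \<inter> Sx) = dl" shows "Sx \<subseteq> T"
proof (rule ccontr)
  assume "\<not> Sx \<subseteq> T"
  then have ne: "Sx - T \<noteq> {}" by blast
  have "0 < sum D (Sx - T)" using ne unfolding D_def Sx_def by (intro sum_pos) auto
  moreover have "dl = sum D (T \<inter> Sx) + sum D (Sx - T)" unfolding dl_def
    using sum.Int_Diff[of Sx D T] by (simp add: Int_commute)
  ultimately show False using assms by simp
qed

lemma DS_empty: assumes "sum D (T \<inter> Sx) = 0" shows "T \<inter> Sx = {}"
proof (rule ccontr)
  assume ne: "T \<inter> Sx \<noteq> {}"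
  have "0 < sum D (T \<inter> Sx)" using ne unfolding D_def Sx_def by (intro sum_pos) auto
  then show False using assms by simp
qed

lemma DN_full: assumes "sum D (T \<inter> Nx) = - dl" shows "Nx \<subseteq> T"
proof (rule ccontr)
  assume "\<not> Nx \<subseteq> T"
  then have ne: "Nx - T \<noteq> {}" by blast
  have "sum D (Nx - T) < 0"
  proof -
    have "0 < sum (\<lambda>x. - D x) (Nx - T)" using ne unfolding D_def Nx_def by (intro sum_pos) auto
    then show ?thesis by (simp add: sum_negf)
  qed
  moreover have "sum D Nx = sum D (T \<inter> Nx) + sum D (Nx - T)"
    using sum.Int_Diff[of Nx D T] by (simp add: Int_commute)
  ultimately show False using assms DN by simp
qed

lemma DN_empty: assumes "sum D (T \<inter> Nx) = 0" shows "T \<inter> Nx = {}"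
proof (rule ccontr)
  assume ne: "T \<inter> Nx \<noteq> {}"
  have "0 < sum (\<lambda>x. - D x) (T \<inter> Nx)" using ne unfolding D_def Nx_def by (intro sum_pos) auto
  then have "sum D (T \<inter> Nx) < 0" by (simp add: sum_negf)
  then show False using assms by simp
qed

lemma absD_eq:
  assumes "\<bar>sum D T\<bar> = dl"
  shows "(Sx \<subseteq> T \<and> T \<inter> Nx = {}) \<or> (Nx \<subseteq> T \<and> T \<inter> Sx = {})"
proof (cases "0 \<le> sum D T")
  case True
  then have "sum D (T \<inter> Sx) + sum D (T \<inter> Nx) = dl" using assms sumD_T[of T] by simp
  then have "sum D (T \<inter> Sx) = dl" "sum D (T \<inter> Nx) = 0" using DS_bounds[of T] DN_bounds[of T] by linarith+
  then show ?thesis using DS_full DN_empty by blast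
next
  case False
  then have "sum D (T \<inter> Sx) + sum D (T \<inter> Nx) = - dl" using assms sumD_T[of T] by simp
  then have "sum D (T \<inter> Sx) = 0" "sum D (T \<inter> Nx) = - dl" using DS_bounds[of T] DN_bounds[of T] by linarith+
  then show ?thesis using DS_empty DN_full by blast
qed

lemma qS_eq: "qS = pS + dl" unfolding qS_def pS_def dl_def by (simp add: sumD)

lemma zz_P0: "sum P0 (T \<inter> Zx) = sum P1 (T \<inter> Zx)" unfolding Zx_def by (intro sum.cong) auto

lemma qSz: "qS + zz \<le> 1"
proof -
  have "qS + zz = sum P0 (UNIV \<inter> Sx) + sum P0 (UNIV \<inter> Zx)" unfolding qS_def zz_def using zz_P0[of UNIV] by simp
  also have "\<dots> \<le> sum P0 UNIV" using sumD_split[of P0 UNIV] sum01(3)[of "UNIV \<inter> Nx"] by linarith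
  finally show ?thesis using P0s by simp
qed

lemma sumN: "sum P1 Nx = 1 - pS - zz" "sum P0 Nx = 1 - qS - zz"
  using sumD_split[of P1 UNIV] sumD_split[of P0 UNIV] P0s P1s zz_P0[of UNIV]
  unfolding pS_def qS_def zz_def by auto

lemma zT_bounds: "0 \<le> sum P1 (T \<inter> Zx)" "sum P1 (T \<inter> Zx) \<le> zz"
  unfolding zz_def using P1nn by (auto intro: sum_nonneg sum_mono2)

lemma zT_abs: "\<bar>sum P1 (T \<inter> Zx) - zz * sum P1 T\<bar> \<le> zz"
proof -
  have z0: "0 \<le> zz" using zT_bounds[of UNIV] by simp
  have "zz * sum P1 T \<le> zz" using z0 sum01[of T] by (simp add: mult_left_le)
  moreover have "0 \<le> zz * sum P1 T" using z0 sum01[of T] by simp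
  ultimately show ?thesis using zT_bounds[of T] by (simp add: abs_le_iff)
qed

lemma caseS:
  assumes "Sx \<subseteq> T" "T \<inter> Nx = {}"
  shows "sum P1 T = pS + sum P1 (T \<inter> Zx)" "sum P0 T = qS + sum P1 (T \<inter> Zx)"
proof -
  have "T \<inter> Sx = Sx" using assms by blast
  then show "sum P1 T = pS + sum P1 (T \<inter> Zx)" "sum P0 T = qS + sum P1 (T \<inter> Zx)"
    using sumD_split[of P1 T] sumD_split[of P0 T] assms zz_P0[of T] unfolding pS_def qS_def by auto
qed

lemma caseN:
  assumes "Nx \<subseteq> T" "T \<inter> Sx = {}"
  shows "sum P1 T = 1 - pS - zz + sum P1 (T \<inter> Zx)" "sum P0 T = 1 - qS - zz + sum P1 (T \<inter> Zx)"
proof -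
  have "T \<inter> Nx = Nx" using assms by blast
  then show "sum P1 T = 1 - pS - zz + sum P1 (T \<inter> Zx)" "sum P0 T = 1 - qS - zz + sum P1 (T \<inter> Zx)"
    using sumD_split[of P1 T] sumD_split[of P0 T] assms zz_P0[of T] sumN by auto
qed


definition "GG l a = min ((V a l pS qS + V a l (1-pS) (1-qS))/(2+a))
                     ((V a l (pS+zz) (qS+zz) + V a l (1-pS-zz) (1-qS-zz))/(2+a))"
definition "KW l a = (if zz = 0 then 0 else (V a l (pS+zz) (qS+zz) - V a l pS qS - a*zz*GG l a)/(a*zz*(1-zz)))"
definition "KD l a = (V a l pS qS - GG l a * sig a l pS qS + KW l a*a*zz*pS)/(a*dl)"
definition "k0 = Min ((\<lambda>T. dl^2 - (sum D T)^2) ` {T. \<bar>sum D T\<bar> < dl})"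
definition "a0 = min (1/2) (k0*(1-zz)/200)"

lemma dl_le1: "dl \<le> 1" using qS_eq sum01[of Sx] unfolding qS_def pS_def by linarith

lemma zz_lt1: assumes "0 < dl" shows "zz < 1"
  using qSz qS_eq sum01[of Sx] assms unfolding pS_def by linarith

lemma k0_pos: assumes "0 < dl" shows "0 < k0" "\<And>T. \<bar>sum D T\<bar> < dl \<Longrightarrow> k0 \<le> dl^2 - (sum D T)^2"
proof -
  let ?A = "(\<lambda>T. dl^2 - (sum D T)^2) ` {T. \<bar>sum D T\<bar> < dl}"
  have fin: "finite ?A" by simp
  have "{} \<in> {T. \<bar>sum D T\<bar> < dl}" using assms by simp
  then have ne: "?A \<noteq> {}" by blast
  have "\<forall>y\<in>?A. 0 < y"
  proof
    fix y assume "y \<in> ?A"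
    then obtain T where T: "\<bar>sum D T\<bar> < dl" "y = dl^2 - (sum D T)^2" by auto
    have "\<bar>sum D T\<bar>^2 < dl^2" using T(1) by (intro power_strict_mono) auto
    then have "(sum D T)^2 < dl^2" by simp
    then show "0 < y" using T by simp
  qed
  then show "0 < k0" unfolding k0_def using fin ne by simp
  fix T assume "\<bar>sum D T\<bar> < dl"
  then show "k0 \<le> dl^2 - (sum D T)^2" unfolding k0_def by (intro Min_le) auto
qed

lemma a0_pos: assumes "0 < dl" shows "0 < a0"
  using k0_pos(1)[OF assms] zz_lt1[OF assms] unfolding a0_def by simp

lemma full_vertex:
  assumes dl: "0 < dl" and l: "0 < l" "l < 1" and a: "0 < a" "a \<le> a0"
  shows "Lf a l zz (GG l a) (KD l a) (KW l a) (sum P1 T) (sum P0 T) (sum P1 (T \<inter> Zx))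
         \<le> V a l (sum P1 T) (sum P0 T)"
proof -
  have a2: "a \<le> 1/2" using a unfolding a0_def by simp
  have z: "0 \<le> zz" "zz < 1" using zT_bounds[of UNIV] zz_lt1[OF dl] by auto
  have pS: "0 \<le> pS" "qS = pS + dl" "qS + zz \<le> 1" using sum01 qS_eq qSz unfolding pS_def by auto
  have qp: "sum P0 T - sum P1 T = sum D T" using sumD by simp
  show ?thesis
  proof (cases "\<bar>sum D T\<bar> < dl")
    case True
    have ak: "a*200 \<le> k0*(1-zz)" using a unfolding a0_def by simp
    show ?thesis unfolding Lf_def
    proof (rule inner_vertex[OF l _ a2 dl dl_le1 z pS sum01(1,2) sum01(3,4) _ zT_abs _ ak GG_def KW_def KD_def])
      show "0 < a" using a by simp
      show "\<bar>sum P0 T - sum P1 T\<bar> \<le> dl" using absD qp by simp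
      show "k0 \<le> dl^2 - (sum P0 T - sum P1 T)^2" using k0_pos(2)[OF dl True] qp by simp
    qed
  next
    case False
    then have "\<bar>sum D T\<bar> = dl" using absD[of T] by simp
    then have cs: "(Sx \<subseteq> T \<and> T \<inter> Nx = {}) \<or> (Nx \<subseteq> T \<and> T \<inter> Sx = {})" by (rule absD_eq)
    have t: "0 \<le> sum P1 (T \<inter> Zx)" "sum P1 (T \<inter> Zx) \<le> zz" by (rule zT_bounds)+
    note E = edge_vertex[OF l _ a2 dl z(1) pS t GG_def KW_def KD_def z(2)]
    show ?thesis
    proof (cases "Sx \<subseteq> T \<and> T \<inter> Nx = {}")
      case True
      then show ?thesis using E(1) caseS[of T] a by simp
    next
      case False
      then have "Nx \<subseteq> T \<and> T \<inter> Sx = {}" using cs by blast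
      then show ?thesis using E(2) caseN[of T] a by simp
    qed
  qed
qed


definition "gv l a x = GG l a * ((1-l)*P1 x + l*P0 x) + KD l a * D x + KW l a * ((if x \<in> Zx then P1 x else 0) - zz*P1 x)"

lemma sum_if_Z: "sum (\<lambda>x. if x \<in> Zx then P1 x else 0) T = sum P1 (T \<inter> Zx)"
  by (simp add: sum.inter_restrict)

lemma gv_sum_T: "sum (gv l a) T = GG l a * ((1-l)* sum P1 T + l* sum P0 T) + KD l a * sum D T
     + KW l a * (sum P1 (T \<inter> Zx) - zz* sum P1 T)"
  unfolding gv_def
  by (simp add: sum.distrib sum_distrib_left sum_distrib_right sum_subtractf sum_if_Z[symmetric] algebra_simps)

lemma gv_UNIV: "sum (gv l a) UNIV = GG l a"
proof -
  have "sum D UNIV = 0" using P0s P1s by (simp add: sumD)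
  moreover have "sum P1 (UNIV \<inter> Zx) = zz" unfolding zz_def by simp
  ultimately show ?thesis unfolding gv_sum_T P0s P1s by (simp add: algebra_simps)
qed

lemma ind_sum:
  fixes f :: "'x \<Rightarrow> real" and a :: real
  shows "(\<Sum>x\<in>UNIV. f x * (1 + a * (if x \<in> T then 1 else 0))) = sum f UNIV + a * sum f T"
proof -
  have "(\<Sum>x\<in>UNIV. f x * (1 + a * (if x \<in> T then 1 else 0))) = (\<Sum>x\<in>UNIV. f x + a * (if x \<in> T then f x else 0))"
    by (intro sum.cong) (auto simp: algebra_simps)
  also have "\<dots> = sum f UNIV + a * sum f T"
  proof -
    have "(\<Sum>x\<in>UNIV. if x \<in> T then f x else 0) = sum f T"
      using sum.inter_restrict[of UNIV f T] by simp
    then show ?thesis by (simp add: sum.distrib sum_distrib_left[symmetric])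
  qed
  finally show ?thesis .
qed

lemma gv_vertex:
  "(\<Sum>x\<in>UNIV. gv l a x * (1 + a * (if x \<in> T then 1 else 0)))
   = Lf a l zz (GG l a) (KD l a) (KW l a) (sum P1 T) (sum P0 T) (sum P1 (T \<inter> Zx))"
  unfolding ind_sum gv_UNIV unfolding gv_sum_T Lf_def sig_def sumD by (simp add: algebra_simps)

lemma column:
  fixes v :: "'x \<Rightarrow> real"
  assumes dl: "0 < dl" and l: "0 < l" "l < 1" and a: "0 < a" "a \<le> a0"
    and v0: "\<And>x. 0 \<le> v x" and vr: "\<And>x x'. v x \<le> (1+a) * v x'"
  shows "(\<Sum>x\<in>UNIV. gv l a x * v x) \<le> (\<Sum>x\<in>UNIV. P0 x * v x) powr l * (\<Sum>x\<in>UNIV. P1 x * v x) powr (1-l)"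
proof (cases "\<exists>x. v x = 0")
  case True
  then obtain x0 where "v x0 = 0" by blast
  then have "\<And>x. v x = 0" using vr[of _ x0] v0 by (metis mult_zero_right order_antisym)
  then show ?thesis by simp
next
  case False
  then have vp: "\<And>x. 0 < v x" using v0 by (simp add: less_le)
  define m where "m = Min (range v)"
  have mv: "\<And>x. m \<le> v x" unfolding m_def by simp
  have "m \<in> range v" unfolding m_def by (rule Min_in) auto
  then obtain x0 where x0: "v x0 = m" by auto
  have mp: "0 < m" using vp x0 by metis
  have vm: "\<And>x. v x \<le> (1+a)*m" using vr x0 by metis
  define s where "s = (\<Sum>x\<in>UNIV. P1 x * v x)"
  define t where "t = (\<Sum>x\<in>UNIV. P0 x * v x)"
  have sm: "m \<le> s"
  proof -
    have "(\<Sum>x\<in>UNIV. P1 x * m) \<le> s" unfolding s_def using mv P1nn by (intro sum_mono mult_left_mono) auto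
    then show ?thesis using P1s by (simp add: sum_distrib_right[symmetric])
  qed
  have tm: "m \<le> t"
  proof -
    have "(\<Sum>x\<in>UNIV. P0 x * m) \<le> t" unfolding t_def using mv P0nn by (intro sum_mono mult_left_mono) auto
    then show ?thesis using P0s by (simp add: sum_distrib_right[symmetric])
  qed
  have sp: "0 < s" and tp: "0 < t" using sm tm mp by auto
  define k where "k = t/s"
  have kp: "0 < k" using sp tp by (simp add: k_def)
  define h where "h x = (1-l) * k powr l * P1 x + l * k powr (l-1) * P0 x" for x
  have hsum: "\<And>w. (\<Sum>x\<in>UNIV. h x * w x) = tg l k (\<Sum>x\<in>UNIV. P1 x * w x) (\<Sum>x\<in>UNIV. P0 x * w x)"
  proof -
    fix w :: "'x \<Rightarrow> real"
    have "\<And>x. h x * w x = ((1-l) * k powr l) * (P1 x * w x) + (l * k powr (l-1)) * (P0 x * w x)"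
      by (simp add: h_def algebra_simps)
    then have "(\<Sum>x\<in>UNIV. h x * w x) = ((1-l) * k powr l) * (\<Sum>x\<in>UNIV. P1 x * w x) + (l * k powr (l-1)) * (\<Sum>x\<in>UNIV. P0 x * w x)"
      by (simp add: sum.distrib sum_distrib_left)
    then show "(\<Sum>x\<in>UNIV. h x * w x) = tg l k (\<Sum>x\<in>UNIV. P1 x * w x) (\<Sum>x\<in>UNIV. P0 x * w x)"
      unfolding tg_def by (simp add: algebra_simps)
  qed
  have hv: "(\<Sum>x\<in>UNIV. h x * v x) = t powr l * s powr (1-l)"
    unfolding hsum s_def[symmetric] t_def[symmetric] k_def by (rule tg_eq[OF sp tp])
  define T where "T = {x. h x - gv l a x < 0}"
  define w where "w x = (1 + a * (if x \<in> T then 1 else 0))" for x :: 'x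
  have step1: "m * (\<Sum>x\<in>UNIV. (h x - gv l a x) * w x) \<le> (\<Sum>x\<in>UNIV. (h x - gv l a x) * v x)"
  proof -
    have "m * (\<Sum>x\<in>UNIV. (h x - gv l a x) * w x) = (\<Sum>x\<in>UNIV. (h x - gv l a x) * (m * w x))"
      by (simp add: sum_distrib_left algebra_simps)
    also have "\<dots> \<le> (\<Sum>x\<in>UNIV. (h x - gv l a x) * v x)"
    proof (rule sum_mono)
      fix x :: 'x
      show "(h x - gv l a x) * (m * w x) \<le> (h x - gv l a x) * v x"
      proof (cases "x \<in> T")
        case True
        then have "h x - gv l a x < 0" unfolding T_def by simp
        moreover have "v x \<le> m * w x" using True vm[of x] by (simp add: w_def algebra_simps)
        ultimately show ?thesis by (simp add: mult_left_mono_neg)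
      next
        case False
        then have "0 \<le> h x - gv l a x" unfolding T_def by simp
        moreover have "m * w x \<le> v x" using False mv[of x] by (simp add: w_def)
        ultimately show ?thesis by (simp add: mult_left_mono)
      qed
    qed
    finally show ?thesis .
  qed
  have step2: "0 \<le> (\<Sum>x\<in>UNIV. (h x - gv l a x) * w x)"
  proof -
    have "(\<Sum>x\<in>UNIV. (h x - gv l a x) * w x) = (\<Sum>x\<in>UNIV. h x * w x) - (\<Sum>x\<in>UNIV. gv l a x * w x)"
      by (simp add: sum_subtractf left_diff_distrib)
    also have "(\<Sum>x\<in>UNIV. h x * w x) = tg l k (1 + a * sum P1 T) (1 + a * sum P0 T)"
      unfolding hsum w_def ind_sum using P0s P1s by simp
    also have "(\<Sum>x\<in>UNIV. gv l a x * w x) = Lf a l zz (GG l a) (KD l a) (KW l a) (sum P1 T) (sum P0 T) (sum P1 (T \<inter> Zx))"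
      unfolding w_def by (rule gv_vertex)
    finally have eq: "(\<Sum>x\<in>UNIV. (h x - gv l a x) * w x) = tg l k (1 + a * sum P1 T) (1 + a * sum P0 T)
         - Lf a l zz (GG l a) (KD l a) (KW l a) (sum P1 T) (sum P0 T) (sum P1 (T \<inter> Zx))" .
    have "V a l (sum P1 T) (sum P0 T) \<le> tg l k (1 + a * sum P1 T) (1 + a * sum P0 T)"
      unfolding V_def using sum01[of T] a by (intro young_tg[OF l kp]) (auto intro: add_pos_nonneg)
    moreover note full_vertex[OF dl l a, of T]
    ultimately show ?thesis unfolding eq by linarith
  qed
  have "0 \<le> (\<Sum>x\<in>UNIV. (h x - gv l a x) * v x)" using step1 step2 mp by (meson mult_nonneg_nonneg less_imp_le order_trans)
  then have "(\<Sum>x\<in>UNIV. gv l a x * v x) \<le> (\<Sum>x\<in>UNIV. h x * v x)"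
    by (simp add: sum_subtractf left_diff_distrib)
  then show ?thesis unfolding hv s_def t_def .
qed


lemma mech_bound:
  assumes dl: "0 < dl" and l: "0 < l" "l < 1" and a: "0 < a" "a \<le> a0" and e: "exp \<epsilon> = 1 + a"
    and M: "is_mechanism k W" and L: "is_LDP \<epsilon> k W"
  shows "GG l a \<le> (\<Sum>y\<in>{..<k}. out_distr P0 W y powr l * out_distr P1 W y powr (1-l))"
proof -
  have col: "(\<Sum>x\<in>UNIV. gv l a x * W x y) \<le> out_distr P0 W y powr l * out_distr P1 W y powr (1-l)"
    if y: "y \<in> {..<k}" for y
  proof -
    have v0: "\<And>x. 0 \<le> W x y" using M y unfolding is_mechanism_def by auto
    have vr: "\<And>x x'. W x y \<le> (1+a) * W x' y"
    proof -
      fix x x'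
      have "(\<Sum>y'\<in>{y}. W x y') \<le> exp \<epsilon> * (\<Sum>y'\<in>{y}. W x' y')" using L y unfolding is_LDP_def by blast
      then show "W x y \<le> (1+a) * W x' y" using e by simp
    qed
    show ?thesis unfolding out_distr_def by (rule column[OF dl l a v0 vr])
  qed
  have "GG l a = (\<Sum>x\<in>UNIV. gv l a x * (\<Sum>y\<in>{..<k}. W x y))"
    using M unfolding is_mechanism_def by (simp add: gv_UNIV)
  also have "\<dots> = (\<Sum>y\<in>{..<k}. \<Sum>x\<in>UNIV. gv l a x * W x y)"
    by (simp add: sum_distrib_left sum.swap[of _ UNIV])
  also have "\<dots> \<le> (\<Sum>y\<in>{..<k}. out_distr P0 W y powr l * out_distr P1 W y powr (1-l))"
    by (rule sum_mono) (rule col)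
  finally show ?thesis .
qed

end

lemma powr_div_pair:
  fixes x y c l :: real
  assumes "0 \<le> x" "0 \<le> y" "0 < c"
  shows "(x/c) powr l * (y/c) powr (1-l) = (x powr l * y powr (1-l)) / c"
proof -
  have "(x/c) powr l * (y/c) powr (1-l) = (x powr l * y powr (1-l)) / (c powr l * c powr (1-l))"
    using assms by (simp add: powr_divide)
  also have "c powr l * c powr (1-l) = c" using assms by (simp add: powr_add[symmetric])
  finally show ?thesis .
qed

lemma bin_out:
  fixes P P0 P1 :: "'x::finite \<Rightarrow> real" and \<tau> \<epsilon> a :: real
  assumes e: "exp \<epsilon> = 1 + a" and P: "is_distr P"
  defines "U \<equiv> {x. \<tau> * P1 x \<le> P0 x}"
  shows "out_distr P (binary_mech P0 P1 \<tau> \<epsilon>) 0 = (1 + a * sum P U)/(2+a)"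
    and "out_distr P (binary_mech P0 P1 \<tau> \<epsilon>) 1 = (1 + a * (1 - sum P U))/(2+a)"
proof -
  have ps: "sum P UNIV = 1" using P unfolding is_distr_def by simp
  have split: "sum f UNIV = sum f U + sum f (- U)" for f :: "'x \<Rightarrow> real"
    using sum.union_disjoint[of U "-U" f] by (simp add: Un_commute)
  have e1: "exp \<epsilon> + 1 = 2 + a" using e by simp
  have b0: "binary_mech P0 P1 \<tau> \<epsilon> x 0 = (if x \<in> U then exp \<epsilon> else 1)/(exp \<epsilon> + 1)" for x
    unfolding binary_mech_def U_def by (auto simp: Let_def)
  have b1: "binary_mech P0 P1 \<tau> \<epsilon> x 1 = (if x \<in> U then 1 else exp \<epsilon>)/(exp \<epsilon> + 1)" for x
    unfolding binary_mech_def U_def by (auto simp: Let_def)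
  have "out_distr P (binary_mech P0 P1 \<tau> \<epsilon>) 0 = (\<Sum>x\<in>UNIV. P x * (if x \<in> U then exp \<epsilon> else 1)) / (2+a)"
    unfolding out_distr_def b0 e1 by (simp add: sum_divide_distrib)
  also have "(\<Sum>x\<in>UNIV. P x * (if x \<in> U then exp \<epsilon> else 1)) = exp \<epsilon> * sum P U + sum P (-U)"
    using split[of "\<lambda>x. P x * (if x \<in> U then exp \<epsilon> else 1)"] by (simp add: sum_distrib_left mult.commute)
  also have "\<dots> = 1 + a * sum P U" using split[of P] ps e by (simp add: algebra_simps)
  finally show "out_distr P (binary_mech P0 P1 \<tau> \<epsilon>) 0 = (1 + a * sum P U)/(2+a)" .
  have "out_distr P (binary_mech P0 P1 \<tau> \<epsilon>) 1 = (\<Sum>x\<in>UNIV. P x * (if x \<in> U then 1 else exp \<epsilon>)) / (2+a)"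
    unfolding out_distr_def b1 e1 by (simp add: sum_divide_distrib)
  also have "(\<Sum>x\<in>UNIV. P x * (if x \<in> U then 1 else exp \<epsilon>)) = sum P U + exp \<epsilon> * sum P (-U)"
    using split[of "\<lambda>x. P x * (if x \<in> U then 1 else exp \<epsilon>)"] by (simp add: sum_distrib_left mult.commute)
  also have "\<dots> = 1 + a * (1 - sum P U)"
  proof -
    have h: "sum P (-U) = 1 - sum P U" using split[of P] ps by simp
    show ?thesis unfolding h e by (simp add: algebra_simps)
  qed
  finally show "out_distr P (binary_mech P0 P1 \<tau> \<epsilon>) 1 = (1 + a * (1 - sum P U))/(2+a)" .
qed


lemma bin_S:
  fixes P0 P1 :: "'x::finite \<Rightarrow> real" and \<tau> \<epsilon> a l :: real
  assumes e: "exp \<epsilon> = 1 + a" and a: "0 \<le> a" and d0: "is_distr P0" and d1: "is_distr P1"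
    and p: "sum P1 {x. \<tau> * P1 x \<le> P0 x} = p" and q: "sum P0 {x. \<tau> * P1 x \<le> P0 x} = q"
    and p01: "0 \<le> p" "p \<le> 1" and q01: "0 \<le> q" "q \<le> 1"
  shows "(\<Sum>y\<in>{..<2}. out_distr P0 (binary_mech P0 P1 \<tau> \<epsilon>) y powr l * out_distr P1 (binary_mech P0 P1 \<tau> \<epsilon>) y powr (1-l))
         = (V a l p q + V a l (1-p) (1-q))/(2+a)"
proof -
  have c: "0 < 2 + a" using a by simp
  have "(\<Sum>y\<in>{..<2}. out_distr P0 (binary_mech P0 P1 \<tau> \<epsilon>) y powr l * out_distr P1 (binary_mech P0 P1 \<tau> \<epsilon>) y powr (1-l))
     = ((1 + a*q)/(2+a)) powr l * ((1 + a*p)/(2+a)) powr (1-l)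
       + ((1 + a*(1-q))/(2+a)) powr l * ((1 + a*(1-p))/(2+a)) powr (1-l)"
    using bin_out[OF e d0, of P0 P1 \<tau>] bin_out[OF e d1, of P0 P1 \<tau>] p q
    by (simp add: numeral_2_eq_2 lessThan_Suc)
  also have "\<dots> = V a l p q / (2+a) + V a l (1-p) (1-q) / (2+a)"
    unfolding V_def using a p01 q01 c
    by (simp add: powr_div_pair)
  finally show ?thesis by (simp add: add_divide_distrib)
qed

lemma V_ge1:
  assumes "0 \<le> a" "0 \<le> p" "0 \<le> q" "0 < l" "l < 1"
  shows "1 \<le> V a l p q"
proof -
  have "1 \<le> (1+a*q) powr l" using assms by (intro ge_one_powr_ge_zero) auto
  moreover have "1 \<le> (1+a*p) powr (1-l)" using assms by (intro ge_one_powr_ge_zero) auto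
  ultimately show ?thesis unfolding V_def by (metis mult_mono' less_le_trans zero_less_one less_imp_le mult.right_neutral)
qed

lemma chern_same:
  fixes Q :: "nat \<Rightarrow> real"
  assumes "\<And>y. y \<in> Y \<Longrightarrow> 0 \<le> Q y" "sum Q Y = 1"
  shows "chernoff_info Y Q Q = 0"
proof -
  have "\<And>t. t \<in> {0<..<(1::real)} \<Longrightarrow> ln (\<Sum>y\<in>Y. Q y powr t * Q y powr (1 - t)) = 0"
  proof -
    fix t :: real
    have "(\<Sum>y\<in>Y. Q y powr t * Q y powr (1 - t)) = (\<Sum>y\<in>Y. Q y)"
    proof (rule sum.cong)
      fix y assume "y \<in> Y"
      then have "0 \<le> Q y" using assms by simp
      then show "Q y powr t * Q y powr (1 - t) = Q y"
        by (cases "Q y = 0") (simp_all add: powr_add[symmetric])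
    qed simp
    then show "ln (\<Sum>y\<in>Y. Q y powr t * Q y powr (1 - t)) = 0" using assms by simp
  qed
  then have "(INF t\<in>{0<..<(1::real)}. ln (\<Sum>y\<in>Y. Q y powr t * Q y powr (1 - t))) = (INF t\<in>{0<..<(1::real)}. 0)"
    by (intro INF_cong) auto
  also have "\<dots> = 0" by simp
  finally show ?thesis unfolding chernoff_info_def by simp
qed


lemma out_sum:
  fixes P :: "'x::finite \<Rightarrow> real"
  assumes M: "is_mechanism k W" and P: "is_distr P"
  shows "sum (out_distr P W) {..<k} = 1" "\<And>y. y \<in> {..<k} \<Longrightarrow> 0 \<le> out_distr P W y"
proof -
  have "sum (out_distr P W) {..<k} = (\<Sum>x\<in>UNIV. P x * (\<Sum>y\<in>{..<k}. W x y))"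
    unfolding out_distr_def by (simp add: sum_distrib_left sum.swap[of _ "{..<k}"])
  also have "\<dots> = 1" using M P unfolding is_mechanism_def is_distr_def by simp
  finally show "sum (out_distr P W) {..<k} = 1" .
  fix y assume "y \<in> {..<k}"
  then show "0 \<le> out_distr P W y" using M P unfolding is_mechanism_def is_distr_def out_distr_def
    by (auto intro!: sum_nonneg)
qed

context twod
begin

definition "tau1 = Min (insert 2 ((\<lambda>x. P0 x / P1 x) ` {x. P1 x < P0 x \<and> 0 < P1 x}))"

lemma tau1_gt1: "1 < tau1"
proof -
  have "\<forall>y\<in>insert 2 ((\<lambda>x. P0 x / P1 x) ` {x. P1 x < P0 x \<and> 0 < P1 x}). 1 < y" by auto
  then show ?thesis unfolding tau1_def by (subst Min_gr_iff) auto
qed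

lemma tau1_U:
  "sum P1 {x. tau1 * P1 x \<le> P0 x} = pS" "sum P0 {x. tau1 * P1 x \<le> P0 x} = qS"
proof -
  let ?U = "{x. tau1 * P1 x \<le> P0 x}"
  have sub: "Sx \<subseteq> ?U"
  proof
    fix x assume x: "x \<in> Sx"
    show "x \<in> ?U"
    proof (cases "0 < P1 x")
      case True
      then have "tau1 \<le> P0 x / P1 x" unfolding tau1_def using x by (intro Min_le) (auto simp: Sx_def)
      then show ?thesis using True by (simp add: le_divide_eq)
    next
      case False then have "P1 x = 0" using P1nn[of x] by simp
      then show ?thesis using P0nn[of x] by simp
    qed
  qed
  have rest: "\<And>x. x \<in> ?U - Sx \<Longrightarrow> P1 x = 0 \<and> P0 x = 0"
  proof -
    fix x assume x: "x \<in> ?U - Sx"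
    then have le: "P0 x \<le> P1 x" "tau1 * P1 x \<le> P0 x" by (auto simp: Sx_def)
    show "P1 x = 0 \<and> P0 x = 0"
    proof (cases "0 < P1 x")
      case True
      then have "P1 x < tau1 * P1 x" using tau1_gt1 by simp
      then show ?thesis using le by simp
    next
      case False then have "P1 x = 0" using P1nn[of x] by simp
      then show ?thesis using le P0nn[of x] by simp
    qed
  qed
  have "sum P1 ?U = sum P1 Sx + sum P1 (?U - Sx)" using sub by (metis sum.subset_diff finite add.commute)
  moreover have "sum P1 (?U - Sx) = 0" using rest by (intro sum.neutral) auto
  ultimately show "sum P1 ?U = pS" unfolding pS_def by simp
  have "sum P0 ?U = sum P0 Sx + sum P0 (?U - Sx)" using sub by (metis sum.subset_diff finite add.commute)
  moreover have "sum P0 (?U - Sx) = 0" using rest by (intro sum.neutral) auto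
  ultimately show "sum P0 ?U = qS" unfolding qS_def by simp
qed

lemma one_U:
  "sum P1 {x. 1 * P1 x \<le> P0 x} = pS + zz" "sum P0 {x. 1 * P1 x \<le> P0 x} = qS + zz"
proof -
  have U: "{x. 1 * P1 x \<le> P0 x} = Sx \<union> Zx" unfolding Sx_def Zx_def by auto
  have "sum P1 (Sx \<union> Zx) = pS + zz" unfolding pS_def zz_def using part by (intro sum.union_disjoint) auto
  then show "sum P1 {x. 1 * P1 x \<le> P0 x} = pS + zz" using U by simp
  have "sum P0 (Sx \<union> Zx) = qS + sum P0 Zx" unfolding qS_def using part by (intro sum.union_disjoint) auto
  then show "sum P0 {x. 1 * P1 x \<le> P0 x} = qS + zz" using U zz_P0[of UNIV] unfolding zz_def by simp
qed

end


theorem corollary5p4: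
  fixes P0 P1 :: "'x::finite \<Rightarrow> real"
  assumes "is_distr P0" and "is_distr P1"
  shows "\<exists>\<epsilon>'>0. \<forall>\<epsilon>. 0 < \<epsilon> \<and> \<epsilon> \<le> \<epsilon>' \<longrightarrow>
           (\<exists>\<tau>>0. \<forall>k (W :: 'x \<Rightarrow> nat \<Rightarrow> real).
              is_mechanism k W \<and> is_LDP \<epsilon> k W \<longrightarrow>
              chernoff_info {..<k} (out_distr P0 W) (out_distr P1 W)
                \<le> chernoff_info {..<2} (out_distr P0 (binary_mech P0 P1 \<tau> \<epsilon>))
                                       (out_distr P1 (binary_mech P0 P1 \<tau> \<epsilon>)))"
proof -
  interpret twod P0 P1 by unfold_locales (rule assms)+
  show ?thesis
  proof (cases "dl = 0")
    case True
    have "UNIV \<inter> Sx = {}" using DS_empty[of UNIV] True unfolding dl_def by simp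
    moreover have "UNIV \<inter> Nx = {}" using DN_empty[of UNIV] True DN by simp
    ultimately have n1: "\<forall>x. \<not> P1 x < P0 x" and n2: "\<forall>x. \<not> P0 x < P1 x" by (auto simp: Sx_def Nx_def)
    have eqP: "P0 = P1"
    proof
      fix x show "P0 x = P1 x" using n1 n2 by (meson linorder_neqE_linordered_idom)
    qed
    show ?thesis
    proof (rule exI[of _ 1], intro conjI allI impI)
      fix \<epsilon> :: real assume eps1: "0 < \<epsilon> \<and> \<epsilon> \<le> 1"
      show "\<exists>\<tau>>0. \<forall>k (W :: 'x \<Rightarrow> nat \<Rightarrow> real).
              is_mechanism k W \<and> is_LDP \<epsilon> k W \<longrightarrow>
              chernoff_info {..<k} (out_distr P0 W) (out_distr P1 W)
                \<le> chernoff_info {..<2} (out_distr P0 (binary_mech P0 P1 \<tau> \<epsilon>))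
                                       (out_distr P1 (binary_mech P0 P1 \<tau> \<epsilon>))"
      proof (intro exI[of _ 1] conjI allI impI)
        fix k and W :: "'x \<Rightarrow> nat \<Rightarrow> real"
        assume M: "is_mechanism k W \<and> is_LDP \<epsilon> k W"
        have c1: "chernoff_info {..<k} (out_distr P0 W) (out_distr P1 W) = 0"
          unfolding eqP using out_sum[OF conjunct1[OF M] assms(2)] by (intro chern_same) auto
        define a where "a = exp \<epsilon> - 1"
        have e: "exp \<epsilon> = 1 + a" unfolding a_def by simp
        have a0: "0 \<le> a" unfolding a_def using eps1 by simp
        have "chernoff_info {..<2} (out_distr P1 (binary_mech P0 P1 1 \<epsilon>)) (out_distr P1 (binary_mech P0 P1 1 \<epsilon>)) = 0"
        proof (rule chern_same)
          fix y :: nat assume "y \<in> {..<2}"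
          then have "y = 0 \<or> y = 1" by auto
          moreover have "0 \<le> sum P1 {x. 1 * P1 x \<le> P0 x}" "sum P1 {x. 1 * P1 x \<le> P0 x} \<le> 1" using sum01 by auto
          ultimately show "0 \<le> out_distr P1 (binary_mech P0 P1 1 \<epsilon>) y"
            using bin_out[OF e assms(2), of P0 P1 1] a0 by auto
        next
          let ?Q = "out_distr P1 (binary_mech P0 P1 1 \<epsilon>)"
          let ?s = "sum P1 {x. 1 * P1 x \<le> P0 x}"
          have h: "?Q 0 = (1 + a * ?s)/(2+a)" "?Q 1 = (1 + a * (1 - ?s))/(2+a)"
            using bin_out[OF e assms(2), of P0 P1 1] by auto
          have "sum ?Q {..<2} = ?Q 0 + ?Q 1" by (simp add: numeral_2_eq_2 lessThan_Suc)
          also have "\<dots> = ((1 + a * ?s) + (1 + a * (1 - ?s)))/(2+a)" unfolding h by (simp add: add_divide_distrib)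
          also have "\<dots> = 1" using a0 by (simp add: algebra_simps)
          finally show "sum ?Q {..<2} = 1" .
        qed
        then show "chernoff_info {..<k} (out_distr P0 W) (out_distr P1 W)
                \<le> chernoff_info {..<2} (out_distr P0 (binary_mech P0 P1 1 \<epsilon>))
                                       (out_distr P1 (binary_mech P0 P1 1 \<epsilon>))"
          using c1 eqP by simp
      qed simp
    qed simp
  next
    case False
    then have dl: "0 < dl" using dl_nn by simp
    define ep where "ep = ln (1 + a0)"
    have a0p: "0 < a0" by (rule a0_pos[OF dl])
    have epp: "0 < ep" unfolding ep_def using a0p by simp
    show ?thesis
    proof (rule exI[of _ ep], intro conjI allI impI epp)
      fix \<epsilon> :: real assume eps: "0 < \<epsilon> \<and> \<epsilon> \<le> ep"
      define a where "a = exp \<epsilon> - 1"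
      have e: "exp \<epsilon> = 1 + a" unfolding a_def by simp
      have ap: "0 < a" unfolding a_def using eps by simp
      have aa0: "a \<le> a0"
      proof -
        have "exp \<epsilon> \<le> exp ep" using eps by simp
        then show ?thesis unfolding a_def ep_def using a0p by simp
      qed
      define SB where "SB \<tau> t = (\<Sum>y\<in>{..<2}. out_distr P0 (binary_mech P0 P1 \<tau> \<epsilon>) y powr t
                                   * out_distr P1 (binary_mech P0 P1 \<tau> \<epsilon>) y powr (1-t))" for \<tau> t
      define I where "I \<tau> = (INF t\<in>{0<..<(1::real)}. ln (SB \<tau> t))" for \<tau>
      have pS01: "0 \<le> pS" "pS \<le> 1" "0 \<le> qS" "qS \<le> 1" using sum01 unfolding pS_def qS_def by auto
      have pz01: "0 \<le> pS + zz" "pS + zz \<le> 1" "0 \<le> qS + zz" "qS + zz \<le> 1"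
        using one_U sum01 by metis+
      have SB1: "SB tau1 t = (V a t pS qS + V a t (1-pS) (1-qS))/(2+a)" for t
        unfolding SB_def by (rule bin_S[OF e _ assms tau1_U]) (use ap pS01 in auto)
      have SB2: "SB 1 t = (V a t (pS+zz) (qS+zz) + V a t (1-pS-zz) (1-qS-zz))/(2+a)" for t
        unfolding SB_def by (subst bin_S[OF e _ assms one_U]) (use ap pz01 in \<open>auto simp: algebra_simps\<close>)
      have GGe: "GG t a = min (SB tau1 t) (SB 1 t)" for t unfolding GG_def SB1 SB2 ..
      have SBlow: "2/(2+a) \<le> SB \<tau> t" if "\<tau> = tau1 \<or> \<tau> = 1" "t \<in> {0<..<1}" for \<tau> t
      proof -
        have "1 \<le> V a t pS qS" "1 \<le> V a t (1-pS) (1-qS)" "1 \<le> V a t (pS+zz) (qS+zz)" "1 \<le> V a t (1-pS-zz) (1-qS-zz)"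
          using that(2) ap pS01 pz01 by (auto intro!: V_ge1)
        then have "2/(2+a) \<le> SB tau1 t" "2/(2+a) \<le> SB 1 t" unfolding SB1 SB2 using ap
          by (auto intro!: divide_right_mono)
        then show ?thesis using that(1) by auto
      qed
      have SBpos: "0 < SB \<tau> t" if "\<tau> = tau1 \<or> \<tau> = 1" "t \<in> {0<..<1}" for \<tau> t
      proof -
        have "0 < 2/(2+a)" using ap by simp
        then show ?thesis using SBlow[OF that] by linarith
      qed
      have bdd: "bdd_below ((\<lambda>t. ln (SB \<tau> t)) ` {0<..<1})" if "\<tau> = tau1 \<or> \<tau> = 1" for \<tau>
      proof (rule bdd_belowI2)
        fix t :: real assume t: "t \<in> {0<..<1}"
        have "0 < SB \<tau> t" by (rule SBpos[OF that t])
        moreover have "2/(2+a) \<le> SB \<tau> t" by (rule SBlow[OF that t])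
        ultimately show "ln (2/(2+a)) \<le> ln (SB \<tau> t)" using ap by (subst ln_le_cancel_iff) auto
      qed
      define \<tau> where "\<tau> = (if I tau1 \<le> I 1 then tau1 else 1)"
      have It: "I \<tau> = min (I tau1) (I 1)" unfolding \<tau>_def by (simp add: min_def)
      show "\<exists>\<tau>>0. \<forall>k (W :: 'x \<Rightarrow> nat \<Rightarrow> real).
              is_mechanism k W \<and> is_LDP \<epsilon> k W \<longrightarrow>
              chernoff_info {..<k} (out_distr P0 W) (out_distr P1 W)
                \<le> chernoff_info {..<2} (out_distr P0 (binary_mech P0 P1 \<tau> \<epsilon>))
                                       (out_distr P1 (binary_mech P0 P1 \<tau> \<epsilon>))"
      proof (intro exI[of _ \<tau>] conjI allI impI)
        show "0 < \<tau>" unfolding \<tau>_def using tau1_gt1 by simp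
        fix k and W :: "'x \<Rightarrow> nat \<Rightarrow> real"
        assume MW: "is_mechanism k W \<and> is_LDP \<epsilon> k W"
        have low: "I \<tau> \<le> ln (\<Sum>y\<in>{..<k}. out_distr P0 W y powr t * out_distr P1 W y powr (1-t))"
          if t: "t \<in> {0<..<1}" for t
        proof -
          have t01: "0 < t" "t < 1" using t by auto
          have mb: "GG t a \<le> (\<Sum>y\<in>{..<k}. out_distr P0 W y powr t * out_distr P1 W y powr (1-t))"
            using mech_bound[OF dl t01 ap aa0 e] MW by blast
          have p1: "0 < SB tau1 t" "0 < SB 1 t" using SBpos t by auto
          have "I \<tau> \<le> min (ln (SB tau1 t)) (ln (SB 1 t))"
          proof -
            have "I tau1 \<le> ln (SB tau1 t)" unfolding I_def by (rule cINF_lower[OF bdd t]) simp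
            moreover have "I 1 \<le> ln (SB 1 t)" unfolding I_def by (rule cINF_lower[OF bdd t]) simp
            ultimately show ?thesis unfolding It by linarith
          qed
          also have "\<dots> = ln (GG t a)" unfolding GGe using p1 by (simp add: min_def)
          also have "\<dots> \<le> ln (\<Sum>y\<in>{..<k}. out_distr P0 W y powr t * out_distr P1 W y powr (1-t))"
          proof -
            have gp: "0 < GG t a" unfolding GGe using p1 by simp
            then have "0 < (\<Sum>y\<in>{..<k}. out_distr P0 W y powr t * out_distr P1 W y powr (1-t))"
              using mb by linarith
            then show ?thesis using mb gp by simp
          qed
          finally show ?thesis .
        qed
        have "I \<tau> \<le> (INF t\<in>{0<..<(1::real)}. ln (\<Sum>y\<in>{..<k}. out_distr P0 W y powr t * out_distr P1 W y powr (1-t)))"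
          by (rule cINF_greatest) (use low in auto)
        then show "chernoff_info {..<k} (out_distr P0 W) (out_distr P1 W)
                \<le> chernoff_info {..<2} (out_distr P0 (binary_mech P0 P1 \<tau> \<epsilon>))
                                       (out_distr P1 (binary_mech P0 P1 \<tau> \<epsilon>))"
          unfolding chernoff_info_def I_def SB_def by simp
      qed
    qed
  qed
qed

end
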